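(* Let $(R,\mathfrak{m})$ be a one-dimensional Cohen–Macaulay local ring. If $I$ is a trace ideal of $R$, then its integral closure $\bar I$ is also a trace ideal.
   Context: For an $R$-module $N$, $\operatorname{tr}(N)$ is the image of $N\otimes_R\operatorname{Hom}_R(N,R)\to R$, $n\otimes\alpha\mapsto\alpha(n)$; an ideal $I$ is a trace ideal if $I=\operatorname{tr}(N)$ for some $R$-module $N$ (equivalently $\operatorname{tr}(I)=I$). $\bar I$ denotes the integral closure of the ideal $I$. *)

theory Defs
  imports Main "HOL-Library.Extended_Nat"
begin

text \<open>Commutative algebra over a commutative ring given as a type 'a :: comm_ring_1
  (the ring R is the whole type).\<close>

definition is_ideal :: "'a::comm_ring_1 set \<Rightarrow> bool" where
  "is_ideal I \<longleftrightarrow> 0 \<in> I \<and> (\<forall>x\<in>I. \<forall>y\<in>I. x + y \<in> I) \<and> (\<forall>r. \<forall>x\<in>I. r * x \<in> I)"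

definition ideal_gen :: "'a::comm_ring_1 set \<Rightarrow> 'a set" where
  "ideal_gen S = \<Inter> {J. is_ideal J \<and> S \<subseteq> J}"

definition ideal_prod :: "'a::comm_ring_1 set \<Rightarrow> 'a set \<Rightarrow> 'a set" where
  "ideal_prod I J = ideal_gen {a * b | a b. a \<in> I \<and> b \<in> J}"

fun ideal_pow :: "'a::comm_ring_1 set \<Rightarrow> nat \<Rightarrow> 'a set" where
  "ideal_pow I 0 = UNIV"
| "ideal_pow I (Suc n) = ideal_prod I (ideal_pow I n)"

definition prime_ideal :: "'a::comm_ring_1 set \<Rightarrow> bool" where
  "prime_ideal P \<longleftrightarrow> is_ideal P \<and> P \<noteq> UNIV \<and> (\<forall>a b. a * b \<in> P \<longrightarrow> a \<in> P \<or> b \<in> P)"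

definition maximal_ideal :: "'a::comm_ring_1 set \<Rightarrow> bool" where
  "maximal_ideal M \<longleftrightarrow> is_ideal M \<and> M \<noteq> UNIV \<and>
     (\<forall>J. is_ideal J \<and> M \<subseteq> J \<longrightarrow> J = M \<or> J = UNIV)"

definition noetherian_ring :: "'a::comm_ring_1 itself \<Rightarrow> bool" where
  "noetherian_ring _ \<longleftrightarrow> (\<forall>I::'a set. is_ideal I \<longrightarrow> (\<exists>S. finite S \<and> I = ideal_gen S))"

definition local_ring_with_max :: "'a::comm_ring_1 set \<Rightarrow> bool" where
  "local_ring_with_max m \<longleftrightarrow> maximal_ideal m \<and> (\<forall>J. maximal_ideal J \<longrightarrow> J = m)"

definition krull_dim :: "'a::comm_ring_1 itself \<Rightarrow> enat" where
  "krull_dim _ = Sup {enat n | n. \<exists>P :: nat \<Rightarrow> 'a set.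
      (\<forall>i\<le>n. prime_ideal (P i)) \<and> (\<forall>i<n. P i \<subset> P (Suc i))}"

definition regular_seq_in :: "'a::comm_ring_1 set \<Rightarrow> 'a list \<Rightarrow> bool" where
  "regular_seq_in m xs \<longleftrightarrow> set xs \<subseteq> m \<and> ideal_gen (set xs) \<noteq> UNIV \<and>
     (\<forall>i<length xs. \<forall>y. xs ! i * y \<in> ideal_gen (set (take i xs)) \<longrightarrow> y \<in> ideal_gen (set (take i xs)))"

definition depth_of :: "'a::comm_ring_1 set \<Rightarrow> enat" where
  "depth_of m = Sup {enat (length xs) | xs. regular_seq_in m xs}"

definition cohen_macaulay_local :: "'a::comm_ring_1 set \<Rightarrow> bool" where
  "cohen_macaulay_local m \<longleftrightarrow> noetherian_ring TYPE('a) \<and> local_ring_with_max m \<and>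
     depth_of m = krull_dim TYPE('a)"

text \<open>R-linear maps I \<rightarrow> R (only values on I matter).\<close>
definition linear_on :: "'a::comm_ring_1 set \<Rightarrow> ('a \<Rightarrow> 'a) \<Rightarrow> bool" where
  "linear_on I f \<longleftrightarrow> (\<forall>x\<in>I. \<forall>y\<in>I. f (x + y) = f x + f y) \<and> (\<forall>r. \<forall>x\<in>I. f (r * x) = r * f x)"

text \<open>Trace of an ideal I: image of I \<otimes> Hom(I,R) \<rightarrow> R, i.e. the ideal generated by all
  \<alpha>(x) with \<alpha> \<in> Hom(I,R), x \<in> I.\<close>
definition trace_ideal_of :: "'a::comm_ring_1 set \<Rightarrow> 'a set" where
  "trace_ideal_of I = ideal_gen {f x | f x. linear_on I f \<and> x \<in> I}"

definition is_trace_ideal :: "'a::comm_ring_1 set \<Rightarrow> bool" where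
  "is_trace_ideal I \<longleftrightarrow> is_ideal I \<and> trace_ideal_of I = I"

definition integral_closure_ideal :: "'a::comm_ring_1 set \<Rightarrow> 'a set" where
  "integral_closure_ideal I = {x. \<exists>n\<ge>1. \<exists>a :: nat \<Rightarrow> 'a.
      (\<forall>i\<in>{1..n}. a i \<in> ideal_pow I i) \<and> x ^ n + (\<Sum>i=1..n. a i * x ^ (n - i)) = 0}"

end

theory Submission
  imports Defs "Jordan_Normal_Form.Char_Poly"
begin


lemma det_trick:
  fixes C :: "'b::comm_ring_1 mat" and e :: "'b vec"
  assumes C: "C \<in> carrier_mat N N" and e: "e \<in> carrier_vec N" and k: "k < N" "e $ k = 1"
    and Ce: "\<And>i. i < N \<Longrightarrow> (\<Sum>j<N. C $$ (i,j) * e $ j) = u * e $ i"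
  shows "poly (char_poly C) u = 0"
proof -
  define M where "M = map_mat (\<lambda>p. poly p u) (char_poly_matrix C)"
  have MC: "M \<in> carrier_mat N N" using C unfolding M_def by auto
  have Mij: "M $$ (i,j) = (if i = j then u else 0) - C $$ (i,j)" if "i < N" "j < N" for i j
    using that C unfolding M_def char_poly_matrix_def by auto
  have Me: "M *\<^sub>v e = 0\<^sub>v N"
  proof (rule eq_vecI)
    fix i assume i: "i < dim_vec (0\<^sub>v N :: 'b vec)"
    hence i: "i < N" by simp
    have "(M *\<^sub>v e) $ i = (\<Sum>j<N. M $$ (i,j) * e $ j)"
      using MC e i by (auto simp: scalar_prod_def atLeast0LessThan intro!: sum.cong)
    also have "\<dots> = (\<Sum>j<N. (if i = j then u else 0) * e $ j) - (\<Sum>j<N. C $$ (i,j) * e $ j)"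
      using i by (simp add: Mij algebra_simps sum_subtractf)
    also have "\<dots> = u * e $ i - u * e $ i" using i Ce[OF i]
      by (simp add: if_distrib[where f="\<lambda>x. x * _"] cong: if_cong)
    finally show "(M *\<^sub>v e) $ i = 0\<^sub>v N $ i" using i by simp
  qed (use MC in auto)
  have "adj_mat M *\<^sub>v (M *\<^sub>v e) = 0\<^sub>v N" using Me adj_mat[OF MC]
    by (intro eq_vecI) (auto simp: scalar_prod_def)
  hence "(adj_mat M * M) *\<^sub>v e = 0\<^sub>v N" using adj_mat(1)[OF MC] MC e
    by (subst assoc_mult_mat_vec) auto
  hence "((det M \<cdot>\<^sub>m 1\<^sub>m N) *\<^sub>v e) $ k = 0" using adj_mat[OF MC] k by simp
  moreover have "((det M \<cdot>\<^sub>m 1\<^sub>m N) *\<^sub>v e) $ k = det M * e $ k"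
  proof -
    have "((det M \<cdot>\<^sub>m 1\<^sub>m N) *\<^sub>v e) $ k = (\<Sum>i = 0..<N. det M * (if k = i then 1 else 0) * e $ i)"
      using k e by (simp add: scalar_prod_def row_def)
    also have "\<dots> = (\<Sum>i = 0..<N. if k = i then det M * e $ i else 0)"
      by (rule sum.cong) auto
    also have "\<dots> = det M * e $ k" using k by simp
    finally show ?thesis .
  qed
  ultimately have "det M = 0" using k by simp
  moreover have "det M = poly (char_poly C) u"
  proof -
    have ph: "comm_ring_hom (\<lambda>p. poly p u)" by unfold_locales auto
    show ?thesis unfolding M_def char_poly_def by (rule comm_ring_hom.hom_det[OF ph])
  qed
  ultimately show ?thesis by simp
qed


definition subr :: "'b::comm_ring_1 set \<Rightarrow> bool" where
  "subr S \<longleftrightarrow> 0 \<in> S \<and> 1 \<in> S \<and> (\<forall>a\<in>S. - a \<in> S) \<and> (\<forall>a\<in>S. \<forall>b\<in>S. a + b \<in> S \<and> a * b \<in> S)"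

lemma subr_sum: "subr S \<Longrightarrow> (\<And>i. i \<in> F \<Longrightarrow> f i \<in> S) \<Longrightarrow> sum f F \<in> S"
  by (induction F rule: infinite_finite_induct) (auto simp: subr_def)

lemma subr_prod: "subr S \<Longrightarrow> (\<And>i. i \<in> F \<Longrightarrow> f i \<in> S) \<Longrightarrow> prod f F \<in> S"
  by (induction F rule: infinite_finite_induct) (auto simp: subr_def)

lemma subr_signof: "subr S \<Longrightarrow> signof p \<in> S"
  by (cases p rule: sign_cases) (auto simp: subr_def)

lemma subr_det:
  assumes S: "subr S" and M: "M \<in> carrier_mat n n" and ent: "\<And>i j. i < n \<Longrightarrow> j < n \<Longrightarrow> M $$ (i,j) \<in> S"
  shows "det M \<in> S"
  unfolding det_def'[OF M]
proof (rule subr_sum[OF S])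
  fix p assume p: "p \<in> {p. p permutes {0..<n}}"
  have "(\<Prod>i = 0..<n. M $$ (i, p i)) \<in> S"
  proof (rule subr_prod[OF S])
    fix i assume "i \<in> {0..<n}"
    moreover hence "p i \<in> {0..<n}" using p by (auto simp: permutes_in_image)
    ultimately show "M $$ (i, p i) \<in> S" using ent by auto
  qed
  thus "signof p * (\<Prod>i = 0..<n. M $$ (i, p i)) \<in> S" using S subr_signof[OF S] by (auto simp: subr_def)
qed

definition polyS :: "'b::comm_ring_1 set \<Rightarrow> 'b poly set" where
  "polyS S = {p. \<forall>i. coeff p i \<in> S}"

lemma subr_polyS: assumes S: "subr S" shows "subr (polyS S)"
proof -
  have "coeff (p * q) i \<in> S" if "p \<in> polyS S" "q \<in> polyS S" for p q i
    unfolding coeff_mult using that S by (intro subr_sum[OF S]) (auto simp: polyS_def subr_def)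
  moreover have "coeff (1::_ poly) i \<in> S" for i using S by (cases i) (auto simp: subr_def)
  ultimately show ?thesis using S unfolding subr_def polyS_def by auto
qed

lemma char_poly_polyS:
  assumes S: "subr S" and C: "C \<in> carrier_mat n n" and ent: "\<And>i j. i < n \<Longrightarrow> j < n \<Longrightarrow> C $$ (i,j) \<in> S"
  shows "char_poly C \<in> polyS S"
  unfolding char_poly_def
proof (rule subr_det[OF subr_polyS[OF S]])
  show "char_poly_matrix C \<in> carrier_mat n n" using C by simp
  fix i j assume ij: "i < n" "j < n"
  have "coeff (char_poly_matrix C $$ (i,j)) k \<in> S" for k
    using ij C ent[OF ij] S by (cases k; cases "k - 1") (auto simp: char_poly_matrix_def subr_def)
  thus "char_poly_matrix C $$ (i,j) \<in> polyS S" by (simp add: polyS_def)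
qed



definition Span :: "'b::comm_ring_1 set \<Rightarrow> (nat \<Rightarrow> 'b) \<Rightarrow> nat \<Rightarrow> 'b set" where
  "Span A g K = {x. \<exists>a. (\<forall>i. a i \<in> A) \<and> x = (\<Sum>i<K. a i * g i)}"

lemma Span_0: "subr A \<Longrightarrow> 0 \<in> Span A g K"
  unfolding Span_def subr_def by (rule CollectI, rule exI[of _ "\<lambda>_. 0"]) auto

lemma Span_add: assumes "subr A" "x \<in> Span A g K" "y \<in> Span A g K" shows "x + y \<in> Span A g K"
proof -
  from assms obtain a b where a: "\<forall>i. a i \<in> A" "x = (\<Sum>i<K. a i * g i)"
    and b: "\<forall>i. b i \<in> A" "y = (\<Sum>i<K. b i * g i)" unfolding Span_def by auto
  show ?thesis unfolding Span_def
    by (rule CollectI, rule exI[of _ "\<lambda>i. a i + b i"])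
      (use a b assms(1) in \<open>auto simp: subr_def sum.distrib distrib_right\<close>)
qed

lemma Span_smult: assumes "subr A" "c \<in> A" "x \<in> Span A g K" shows "c * x \<in> Span A g K"
proof -
  from assms obtain a where a: "\<forall>i. a i \<in> A" "x = (\<Sum>i<K. a i * g i)"
    unfolding Span_def by auto
  show ?thesis unfolding Span_def
    by (rule CollectI, rule exI[of _ "\<lambda>i. c * a i"])
      (use a assms in \<open>auto simp: subr_def sum_distrib_left mult.assoc\<close>)
qed

lemma Span_gen: assumes "subr A" "j < K" shows "g j \<in> Span A g K"
proof -
  have "(\<Sum>i<K. (if i = j then 1 else 0) * g i) = g j" using assms(2)
    by (simp add: if_distrib[where f="\<lambda>x. x * _"] cong: if_cong)
  thus ?thesis unfolding Span_def using assms(1)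
    by (intro CollectI exI[of _ "\<lambda>i. if i = j then 1 else 0"]) (auto simp: subr_def)
qed

lemma Span_sum: "subr A \<Longrightarrow> (\<And>i. i \<in> F \<Longrightarrow> f i \<in> Span A g K) \<Longrightarrow> sum f F \<in> Span A g K"
  by (induction F rule: infinite_finite_induct) (auto intro: Span_0 Span_add)

lemma pow_in_Span:
  assumes A: "subr A" and n: "n \<ge> 1" and c: "\<And>i. c i \<in> A" and eq: "u ^ n = (\<Sum>i<n. c i * u ^ i)"
  shows "u ^ k \<in> Span A (\<lambda>i. u ^ i) n"
proof (induction k)
  case 0
  show ?case using Span_gen[OF A, of 0 n "\<lambda>i. u ^ i"] n by simp
next
  case (Suc k)
  then obtain a where a: "\<forall>i. a i \<in> A" "u ^ k = (\<Sum>i<n. a i * u ^ i)" unfolding Span_def by auto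
  have un: "u ^ n \<in> Span A (\<lambda>i. u ^ i) n" unfolding Span_def using c eq by auto
  have "u ^ Suc k = (\<Sum>i<n. a i * u ^ Suc i)" using a(2) by (simp add: sum_distrib_left ac_simps)
  also have "\<dots> \<in> Span A (\<lambda>i. u ^ i) n"
  proof (rule Span_sum[OF A], rule Span_smult[OF A])
    fix i assume i: "i \<in> {..<n}"
    show "a i \<in> A" using a by auto
    show "u ^ Suc i \<in> Span A (\<lambda>i. u ^ i) n"
    proof (cases "Suc i < n")
      case True thus ?thesis using Span_gen[OF A True, of "\<lambda>i. u ^ i"] by simp
    next
      case False hence "Suc i = n" using i by auto
      thus ?thesis using un by simp
    qed
  qed
  finally show ?case .
qed

lemma intg_add:
  fixes u v :: "'b::comm_ring_1"
  assumes A: "subr A" and n: "n \<ge> 1" and c: "\<And>i. c i \<in> A" and equ: "u ^ n = (\<Sum>i<n. c i * u ^ i)"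
    and m: "m \<ge> 1" and d: "\<And>i. d i \<in> A" and eqv: "v ^ m = (\<Sum>i<m. d i * v ^ i)"
  shows "\<exists>P. P \<in> polyS A \<and> coeff P (degree P) = 1 \<and> poly P (u + v) = 0"
proof -
  define N where "N = n * m"
  define e where "e p = u ^ (p div m) * v ^ (p mod m)" for p
  have Npos: "0 < N" using n m by (simp add: N_def)
  have gen: "u ^ i * v ^ j \<in> Span A e N" if "i < n" "j < m" for i j
  proof -
    have "Suc i * m \<le> n * m" using that by (intro mult_le_mono1) simp
    hence "i * m + j < N" unfolding N_def using that by simp
    moreover have "e (i * m + j) = u ^ i * v ^ j" unfolding e_def using that by simp
    ultimately show ?thesis using Span_gen[OF A, of "i * m + j" N e] by simp
  qed
  have mono: "u ^ a * v ^ b \<in> Span A e N" for a b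
  proof -
    obtain ca where ca: "\<forall>i. ca i \<in> A" "u ^ a = (\<Sum>i<n. ca i * u ^ i)"
      using pow_in_Span[OF A n c equ, of a] unfolding Span_def by auto
    obtain cb where cb: "\<forall>i. cb i \<in> A" "v ^ b = (\<Sum>i<m. cb i * v ^ i)"
      using pow_in_Span[OF A m d eqv, of b] unfolding Span_def by auto
    have "u ^ a * v ^ b = (\<Sum>i<n. \<Sum>j<m. (ca i * cb j) * (u ^ i * v ^ j))"
      unfolding ca(2) cb(2) sum_product by (simp add: ac_simps)
    also have "\<dots> \<in> Span A e N"
      by (intro Span_sum[OF A] Span_smult[OF A] gen) (use ca cb A in \<open>auto simp: subr_def\<close>)
    finally show ?thesis .
  qed
  have step: "(u + v) * e p \<in> Span A e N" for p
  proof -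
    have "(u + v) * e p = u ^ Suc (p div m) * v ^ (p mod m) + u ^ (p div m) * v ^ Suc (p mod m)"
      unfolding e_def by (simp add: algebra_simps)
    thus ?thesis by (simp only:) (rule Span_add[OF A mono mono])
  qed
  have "\<forall>p. \<exists>a. (\<forall>i. a i \<in> A) \<and> (u + v) * e p = (\<Sum>i<N. a i * e i)"
    using step unfolding Span_def by auto
  then obtain Cf where Cf: "\<And>p i. Cf p i \<in> A" "\<And>p. (u + v) * e p = (\<Sum>i<N. Cf p i * e i)"
    by metis
  define C where "C = mat N N (\<lambda>(p,q). Cf p q)"
  define ev where "ev = vec N e"
  have CC: "C \<in> carrier_mat N N" unfolding C_def by simp
  have "poly (char_poly C) (u + v) = 0"
  proof (rule det_trick[OF CC _ Npos])
    show "ev \<in> carrier_vec N" unfolding ev_def by simp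
    show "ev $ 0 = 1" unfolding ev_def e_def using Npos by simp
    fix i assume i: "i < N"
    have "(\<Sum>j<N. C $$ (i, j) * ev $ j) = (\<Sum>j<N. Cf i j * e j)"
      using i unfolding C_def ev_def by (intro sum.cong) auto
    also have "\<dots> = (u + v) * ev $ i" using Cf(2)[of i] i unfolding ev_def by simp
    finally show "(\<Sum>j<N. C $$ (i, j) * ev $ j) = (u + v) * ev $ i" .
  qed
  moreover have "char_poly C \<in> polyS A"
    by (rule char_poly_polyS[OF A CC]) (use Cf in \<open>auto simp: C_def\<close>)
  moreover have "coeff (char_poly C) (degree (char_poly C)) = 1"
    using degree_monic_char_poly[OF CC] by simp
  ultimately show ?thesis by blast
qed



lemma ideal_gen_ideal: "is_ideal (ideal_gen S)"
  unfolding ideal_gen_def is_ideal_def by auto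

lemma ideal_gen_sub: "S \<subseteq> ideal_gen S"
  unfolding ideal_gen_def by auto

lemma ideal_gen_least: "is_ideal J \<Longrightarrow> S \<subseteq> J \<Longrightarrow> ideal_gen S \<subseteq> J"
  unfolding ideal_gen_def by auto

lemma ideal_0: "is_ideal J \<Longrightarrow> 0 \<in> J" unfolding is_ideal_def by auto
lemma ideal_add: "is_ideal J \<Longrightarrow> x \<in> J \<Longrightarrow> y \<in> J \<Longrightarrow> x + y \<in> J" unfolding is_ideal_def by auto
lemma ideal_mult: "is_ideal J \<Longrightarrow> x \<in> J \<Longrightarrow> r * x \<in> J" unfolding is_ideal_def by auto
lemma ideal_mult2: "is_ideal J \<Longrightarrow> x \<in> J \<Longrightarrow> x * r \<in> J"
  unfolding is_ideal_def by (metis mult.commute)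
lemma ideal_uminus: "is_ideal J \<Longrightarrow> x \<in> J \<Longrightarrow> - x \<in> J"
  using ideal_mult[of J x "-1"] by simp
lemma ideal_sum: "is_ideal J \<Longrightarrow> (\<And>i. i \<in> F \<Longrightarrow> f i \<in> J) \<Longrightarrow> sum f F \<in> J"
  by (induction F rule: infinite_finite_induct) (auto intro: ideal_0 ideal_add)

lemma ideal_pow_ideal: "is_ideal (ideal_pow I k)"
proof (cases k)
  case 0 then show ?thesis by (simp add: is_ideal_def)
next
  case (Suc l) then show ?thesis by (simp add: ideal_prod_def ideal_gen_ideal)
qed

lemma ideal_pow_Suc_iff: "ideal_pow I (Suc k) = ideal_gen {a * b | a b. a \<in> I \<and> b \<in> ideal_pow I k}"
  by (simp add: ideal_prod_def)

lemma ideal_pow_mult: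
  "a \<in> ideal_pow I i \<Longrightarrow> b \<in> ideal_pow I j \<Longrightarrow> a * b \<in> ideal_pow I (i + j)"
proof (induction i arbitrary: a)
  case 0
  thus ?case using ideal_mult[OF ideal_pow_ideal] by simp
next
  case (Suc i)
  define T where "T = {a. a * b \<in> ideal_pow I (Suc i + j)}"
  have T: "is_ideal T" unfolding T_def is_ideal_def
    using ideal_pow_ideal[of I "Suc i + j"] unfolding is_ideal_def by (auto simp: distrib_right mult.assoc)
  have "{c * d | c d. c \<in> I \<and> d \<in> ideal_pow I i} \<subseteq> T"
  proof safe
    fix c d assume c: "c \<in> I" and d: "d \<in> ideal_pow I i"
    have "d * b \<in> ideal_pow I (i + j)" using Suc.IH[OF d] Suc.prems(2) by simp
    hence "c * (d * b) \<in> ideal_pow I (Suc (i + j))"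
      unfolding ideal_pow_Suc_iff using c by (intro set_mp[OF ideal_gen_sub]) auto
    thus "c * d \<in> T" unfolding T_def by (simp add: mult.assoc)
  qed
  hence "ideal_pow I (Suc i) \<subseteq> T" unfolding ideal_pow_Suc_iff by (rule ideal_gen_least[OF T])
  thus ?case using Suc.prems(1) unfolding T_def by auto
qed

lemma ideal_pow_one: assumes "is_ideal I" shows "ideal_pow I 1 = I"
proof
  show "ideal_pow I 1 \<subseteq> I" unfolding One_nat_def ideal_pow_Suc_iff
    by (rule ideal_gen_least[OF assms]) (auto intro: ideal_mult2[OF assms])
  show "I \<subseteq> ideal_pow I 1"
  proof
    fix x assume "x \<in> I"
    hence "x * 1 \<in> {a * b | a b. a \<in> I \<and> b \<in> ideal_pow I 0}"
      by (intro CollectI exI[of _ x] exI[of _ 1]) simp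
    thus "x \<in> ideal_pow I 1" unfolding One_nat_def ideal_pow_Suc_iff using ideal_gen_sub by fastforce
  qed
qed

lemma ideal_pow_sub: assumes "is_ideal I" "k \<ge> 1" shows "ideal_pow I k \<subseteq> I"
proof -
  obtain l where k: "k = Suc l" using assms(2) by (cases k) auto
  show ?thesis unfolding k ideal_pow_Suc_iff
    by (rule ideal_gen_least[OF assms(1)]) (auto intro: ideal_mult2[OF assms(1)])
qed

definition Rees :: "'a::comm_ring_1 set \<Rightarrow> 'a poly set" where
  "Rees I = {p. \<forall>i. coeff p i \<in> ideal_pow I i}"

lemma subr_Rees: "subr (Rees I)"
proof -
  have "coeff (p * q) i \<in> ideal_pow I i" if "p \<in> Rees I" "q \<in> Rees I" for p q i
    unfolding coeff_mult
  proof (rule ideal_sum[OF ideal_pow_ideal])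
    fix j assume "j \<in> {..i}"
    hence "ideal_pow I (j + (i - j)) = ideal_pow I i" by simp
    thus "coeff p j * coeff q (i - j) \<in> ideal_pow I i"
      using ideal_pow_mult[of "coeff p j" I j "coeff q (i - j)" "i - j"] that
      unfolding Rees_def by auto
  qed
  moreover have "coeff (1::_ poly) i \<in> ideal_pow I i" for i
    using ideal_0[OF ideal_pow_ideal[of I i]] by (cases i) auto
  ultimately show ?thesis unfolding subr_def Rees_def
    by (auto intro: ideal_0[OF ideal_pow_ideal] ideal_add[OF ideal_pow_ideal] ideal_uminus[OF ideal_pow_ideal])
qed



abbreviation icl where "icl \<equiv> integral_closure_ideal"

lemma sum_rev1: "(\<Sum>i=1..n. g (n - i)) = (\<Sum>j<n. g j)" for g :: "nat \<Rightarrow> 'b::comm_monoid_add"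
  by (rule sum.reindex_bij_witness[of _ "\<lambda>j. n - j" "\<lambda>i. n - i"]) auto

lemma monom_sum: "(\<Sum>i\<in>F. monom (f i) n) = monom (\<Sum>i\<in>F. f i) n"
  by (induction F rule: infinite_finite_induct) (auto simp: add_monom)

lemma icl_0: "0 \<in> icl I"
  unfolding integral_closure_ideal_def
proof -
  have "\<forall>i\<in>{1..1}. (0::'a) \<in> ideal_pow I i" using ideal_0[OF ideal_pow_ideal] by blast
  thus "0 \<in> {x. \<exists>n\<ge>1. \<exists>a. (\<forall>i\<in>{1..n}. a i \<in> ideal_pow I i) \<and> x ^ n + (\<Sum>i = 1..n. a i * x ^ (n - i)) = 0}"
    by (intro CollectI exI[of _ "1::nat"] conjI exI[of _ "\<lambda>_. 0::'a"]) auto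
qed

lemma icl_mult: assumes "x \<in> icl I" shows "r * x \<in> icl I"
proof -
  from assms obtain n a where n: "n \<ge> 1" and a: "\<forall>i\<in>{1..n}. a i \<in> ideal_pow I i"
    and eq: "x ^ n + (\<Sum>i=1..n. a i * x ^ (n - i)) = 0"
    unfolding integral_closure_ideal_def by auto
  have "(r * x) ^ n + (\<Sum>i=1..n. (r ^ i * a i) * (r * x) ^ (n - i)) = r ^ n * (x ^ n + (\<Sum>i=1..n. a i * x ^ (n - i)))"
  proof -
    have "(\<Sum>i=1..n. (r ^ i * a i) * (r * x) ^ (n - i)) = (\<Sum>i=1..n. r ^ n * (a i * x ^ (n - i)))"
    proof (rule sum.cong)
      fix i assume "i \<in> {1..n}"
      hence "r ^ i * r ^ (n - i) = r ^ n" by (simp add: power_add[symmetric])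
      thus "(r ^ i * a i) * (r * x) ^ (n - i) = r ^ n * (a i * x ^ (n - i))"
        by (simp add: power_mult_distrib) (metis mult.assoc mult.commute)
    qed simp
    thus ?thesis by (simp add: distrib_left sum_distrib_left power_mult_distrib)
  qed
  also have "\<dots> = 0" using eq by simp
  finally show ?thesis unfolding integral_closure_ideal_def using n a
    by (intro CollectI exI[of _ n] conjI exI[of _ "\<lambda>i. r ^ i * a i"]) (auto intro: ideal_mult[OF ideal_pow_ideal])
qed

lemma icl_I: assumes "is_ideal I" "x \<in> I" shows "x \<in> icl I"
  unfolding integral_closure_ideal_def using assms ideal_pow_one[OF assms(1)]
  by (intro CollectI exI[of _ 1] conjI exI[of _ "\<lambda>_. - x"]) (auto intro: ideal_uminus)

lemma icl_to_rees:
  assumes "x \<in> icl I"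
  shows "\<exists>n c. n \<ge> 1 \<and> (\<forall>i. c i \<in> Rees I) \<and> monom x 1 ^ n = (\<Sum>i<n. c i * monom x 1 ^ i)"
proof -
  from assms obtain n a where n: "n \<ge> 1" and a: "\<forall>i\<in>{1..n}. a i \<in> ideal_pow I i"
    and eq: "x ^ n + (\<Sum>i=1..n. a i * x ^ (n - i)) = 0"
    unfolding integral_closure_ideal_def by auto
  define c where "c j = monom (- a (n - j)) (n - j)" for j
  have cR: "c j \<in> Rees I" for j
  proof (cases "j < n")
    case True
    hence "a (n - j) \<in> ideal_pow I (n - j)" using a by auto
    thus ?thesis unfolding c_def Rees_def
      by (auto intro: ideal_uminus[OF ideal_pow_ideal] ideal_0[OF ideal_pow_ideal])
  next
    case False
    hence "n - j = 0" by simp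
    thus ?thesis unfolding c_def Rees_def
      by (auto intro: ideal_uminus[OF ideal_pow_ideal] ideal_0[OF ideal_pow_ideal] simp: is_ideal_def)
  qed
  have "(\<Sum>i<n. c i * monom x 1 ^ i) = (\<Sum>i<n. monom (- (a (n - i) * x ^ i)) n)"
    unfolding c_def monom_power by (intro sum.cong) (auto simp: mult_monom)
  also have "\<dots> = monom (- (\<Sum>i<n. a (n - i) * x ^ i)) n"
    by (simp add: monom_sum sum_negf)
  also have "(\<Sum>i<n. a (n - i) * x ^ i) = (\<Sum>i=1..n. a i * x ^ (n - i))"
    unfolding sum_rev1[symmetric, of "\<lambda>i. a (n - i) * x ^ i"] by (intro sum.cong) auto
  also have "- \<dots> = x ^ n" using eq by (metis add.commute minus_unique)
  finally show ?thesis using n cR by (intro exI[of _ n] exI[of _ c]) (simp add: monom_power)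
qed


lemma rees_to_icl:
  fixes z :: "'a::comm_ring_1"
  assumes P: "P \<in> polyS (Rees I)" and mon: "coeff P (degree P) = 1" and root: "poly P (monom z 1) = 0"
  shows "z \<in> icl I"
proof -
  define D where "D = degree P"
  define b where "b j = coeff (coeff P j) (D - j)" for j
  have "coeff (poly P (monom z 1)) D = (\<Sum>j\<le>D. coeff (coeff P j * monom (z ^ j) j) D)"
    unfolding poly_altdef D_def[symmetric] coeff_sum monom_power by simp
  also have "\<dots> = (\<Sum>j\<le>D. b j * z ^ j)"
  proof (rule sum.cong)
    fix j assume j: "j \<in> {..D}"
    show "coeff (coeff P j * monom (z ^ j) j) D = b j * z ^ j"
    proof -
      have "coeff (coeff P j * monom (z ^ j) j) D = coeff (monom (z ^ j) j * coeff P j) D"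
        by (rule arg_cong[where f="\<lambda>p. coeff p D"], rule mult.commute)
      also have "\<dots> = z ^ j * coeff (coeff P j) (D - j)" unfolding coeff_monom_mult using j by simp
      finally show ?thesis unfolding b_def by (simp add: mult.commute[of "z ^ j"])
    qed
  qed simp
  also have "\<dots> = z ^ D + (\<Sum>j<D. b j * z ^ j)"
  proof -
    have "{..D} = insert D {..<D}" by auto
    hence "(\<Sum>j\<le>D. b j * z ^ j) = b D * z ^ D + (\<Sum>j<D. b j * z ^ j)" by simp
    moreover have "b D = 1" using mon unfolding b_def D_def by simp
    ultimately show ?thesis by simp
  qed
  finally have eq: "z ^ D + (\<Sum>j<D. b j * z ^ j) = 0" using root by simp
  show ?thesis
  proof (cases "D = 0")
    case True
    hence "(1::'a) = 0" using eq by simp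
    hence "z = 0" by (metis mult_1 mult_zero_left)
    thus ?thesis using icl_0 by simp
  next
    case False
    define a where "a i = b (D - i)" for i
    have "(\<Sum>j<D. b j * z ^ j) = (\<Sum>i=1..D. a i * z ^ (D - i))"
      unfolding sum_rev1[symmetric, of "\<lambda>j. b j * z ^ j"] a_def ..
    hence eq2: "z ^ D + (\<Sum>i=1..D. a i * z ^ (D - i)) = 0" using eq by simp
    have "a i \<in> ideal_pow I i" if "i \<in> {1..D}" for i
    proof -
      have "D - (D - i) = i" using that by auto
      thus ?thesis using P unfolding a_def b_def polyS_def Rees_def by auto
    qed
    thus ?thesis unfolding integral_closure_ideal_def using False eq2
      by (intro CollectI exI[of _ D] conjI exI[of _ a]) auto
  qed
qed

lemma icl_add:
  assumes x: "x \<in> icl I" and y: "y \<in> icl I"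
  shows "x + y \<in> icl I"
proof -
  obtain n c where n: "n \<ge> 1" "\<forall>i. c i \<in> Rees I" "monom x 1 ^ n = (\<Sum>i<n. c i * monom x 1 ^ i)"
    using icl_to_rees[OF x] by blast
  obtain m d where m: "m \<ge> 1" "\<forall>i. d i \<in> Rees I" "monom y 1 ^ m = (\<Sum>i<m. d i * monom y 1 ^ i)"
    using icl_to_rees[OF y] by blast
  obtain P where P: "P \<in> polyS (Rees I)" "coeff P (degree P) = 1" "poly P (monom x 1 + monom y 1) = 0"
    using intg_add[OF subr_Rees n(1) _ n(3) m(1) _ m(3)] n(2) m(2) by blast
  show ?thesis using rees_to_icl[OF P(1,2)] P(3) by (simp add: add_monom)
qed



lemma icl_ideal: "is_ideal (icl I)"
  unfolding is_ideal_def using icl_0 icl_add icl_mult by blast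

lemma linear_on_mono: "linear_on J f \<Longrightarrow> I \<subseteq> J \<Longrightarrow> is_ideal I \<Longrightarrow> linear_on I f"
  unfolding linear_on_def is_ideal_def by blast

lemma trace_map:
  assumes "is_trace_ideal I" "linear_on I f" "b \<in> I" shows "f b \<in> I"
proof -
  have "f b \<in> {f x | f x. linear_on I f \<and> x \<in> I}"
    by (intro CollectI exI[of _ f] exI[of _ b]) (simp add: assms)
  hence "f b \<in> trace_ideal_of I" unfolding trace_ideal_of_def by (rule subsetD[OF ideal_gen_sub])
  thus ?thesis using assms(1) unfolding is_trace_ideal_def by simp
qed

lemma lin_sum:
  assumes lin: "linear_on J f" and K: "is_ideal K" "K \<subseteq> J"
  shows "(\<And>i. i \<in> F \<Longrightarrow> h i \<in> K) \<Longrightarrow> f (sum h F) = (\<Sum>i\<in>F. f (h i))"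
proof (induction F rule: infinite_finite_induct)
  case (infinite F)
  have "0 \<in> J" using ideal_0[OF K(1)] K(2) by blast
  hence "f (0 * 0) = 0 * f 0" using lin unfolding linear_on_def by blast
  hence "f 0 = 0" by simp
  thus ?case using infinite by simp
next
  case empty
  have "0 \<in> J" using ideal_0[OF K(1)] K(2) by blast
  hence "f (0 * 0) = 0 * f 0" using lin unfolding linear_on_def by blast
  hence "f 0 = 0" by simp
  thus ?case by simp
next
  case (insert i F)
  have "sum h F \<in> K" using insert.prems by (intro ideal_sum[OF K(1)]) auto
  moreover have "h i \<in> K" using insert.prems by auto
  ultimately have "h i \<in> J" "sum h F \<in> J" using K(2) by blast+
  hence "f (h i + sum h F) = f (h i) + f (sum h F)"
    using lin unfolding linear_on_def by blast
  thus ?case using insert by simp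
qed

theorem trace_icl:
  assumes tr: "is_trace_ideal I" and lin: "linear_on (icl I) f" and x: "x \<in> icl I"
  shows "f x \<in> icl I"
proof -
  have I: "is_ideal I" using tr unfolding is_trace_ideal_def by simp
  define J where "J = icl I"
  have J: "is_ideal J" unfolding J_def by (rule icl_ideal)
  have IJ: "I \<subseteq> J" unfolding J_def using icl_I[OF I] by blast
  have flin: "f (r * w) = r * f w" if "w \<in> J" for r w using lin that unfolding linear_on_def J_def by auto
  have fadd: "f (v + w) = f v + f w" if "v \<in> J" "w \<in> J" for v w using lin that unfolding linear_on_def J_def by auto
  have f0: "f 0 = 0" using flin[of 0 0] ideal_0[OF J] by simp
  have linI: "linear_on I f" using linear_on_mono[OF lin _ I] IJ unfolding J_def by simp
  have fI: "f b \<in> I" if "b \<in> I" for b using trace_map[OF tr linI that] .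
  have PkI: "ideal_pow I k \<subseteq> I" if "k \<ge> 1" for k using ideal_pow_sub[OF I that] .
  have fIk: "f b \<in> ideal_pow I k" if k1: "k \<ge> 1" and bk: "b \<in> ideal_pow I k" for k b
  proof -
    obtain l where k: "k = Suc l" using k1 by (cases k) auto
    define T where "T = {w. w \<in> ideal_pow I k \<and> f w \<in> ideal_pow I k}"
    have sub: "ideal_pow I k \<subseteq> J" using PkI[OF k1] IJ by blast
    have T: "is_ideal T" unfolding is_ideal_def T_def
    proof (intro conjI ballI allI)
      show "0 \<in> {w. w \<in> ideal_pow I k \<and> f w \<in> ideal_pow I k}"
        using f0 ideal_0[OF ideal_pow_ideal] by simp
    next
      fix v w assume "v \<in> {w. w \<in> ideal_pow I k \<and> f w \<in> ideal_pow I k}" "w \<in> {w. w \<in> ideal_pow I k \<and> f w \<in> ideal_pow I k}"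
      hence vw: "v \<in> ideal_pow I k" "f v \<in> ideal_pow I k" "w \<in> ideal_pow I k" "f w \<in> ideal_pow I k" by auto
      hence "f (v + w) = f v + f w" using fadd sub by blast
      thus "v + w \<in> {w. w \<in> ideal_pow I k \<and> f w \<in> ideal_pow I k}"
        using ideal_add[OF ideal_pow_ideal vw(1) vw(3)] ideal_add[OF ideal_pow_ideal vw(2) vw(4)] by simp
    next
      fix r w assume "w \<in> {w. w \<in> ideal_pow I k \<and> f w \<in> ideal_pow I k}"
      hence w: "w \<in> ideal_pow I k" "f w \<in> ideal_pow I k" by auto
      hence "f (r * w) = r * f w" using flin sub by blast
      thus "r * w \<in> {w. w \<in> ideal_pow I k \<and> f w \<in> ideal_pow I k}"
        using ideal_mult[OF ideal_pow_ideal w(1)] ideal_mult[OF ideal_pow_ideal w(2)] by simp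
    qed
    have "{c * d | c d. c \<in> I \<and> d \<in> ideal_pow I l} \<subseteq> T"
    proof safe
      fix c d assume c: "c \<in> I" and d: "d \<in> ideal_pow I l"
      have cd: "c * d \<in> ideal_pow I k" unfolding k ideal_pow_Suc_iff
        using c d by (intro set_mp[OF ideal_gen_sub]) auto
      have "f (d * c) = d * f c" using flin c IJ by auto
      moreover have "f c * d \<in> ideal_pow I k" unfolding k ideal_pow_Suc_iff
        using fI[OF c] d by (intro set_mp[OF ideal_gen_sub]) auto
      ultimately have "f (c * d) \<in> ideal_pow I k" by (simp add: mult.commute)
      thus "c * d \<in> T" using cd unfolding T_def by simp
    qed
    hence "ideal_pow I k \<subseteq> T" unfolding k ideal_pow_Suc_iff by (rule ideal_gen_least[OF T])
    thus ?thesis using bk unfolding T_def by auto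
  qed
  have fiter: "(f ^^ j) b \<in> ideal_pow I k" if "k \<ge> 1" "b \<in> ideal_pow I k" for j k b
    using that by (induction j) (auto intro: fIk)
  from x obtain n a where n: "n \<ge> 1" and a: "\<forall>i\<in>{1..n}. a i \<in> ideal_pow I i"
    and eq: "x ^ n + (\<Sum>i=1..n. a i * x ^ (n - i)) = 0"
    unfolding integral_closure_ideal_def by auto
  have xJ: "x \<in> J" using x unfolding J_def .
  define y where "y = f x"
  define h where "h k i = (if n - i \<le> k then (f ^^ (k - (n - i))) (a i) * y ^ (n - i)
                          else a i * x ^ (n - i - k) * y ^ k)" for k i
  define E where "E k = x ^ (n - k) * y ^ k + (\<Sum>i=1..n. h k i)" for k
  have hI: "h k i \<in> I" if "i \<in> {1..n}" for k i
  proof -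
    have ai: "a i \<in> ideal_pow I i" using a that by auto
    have "i \<ge> 1" using that by simp
    hence "(f ^^ j) (a i) \<in> I" for j using fiter[OF _ ai] PkI by blast
    moreover have "a i \<in> I" using ai PkI \<open>i \<ge> 1\<close> by blast
    ultimately show ?thesis unfolding h_def using ideal_mult2[OF I] by auto
  qed
  have hstep: "f (h k i) = h (Suc k) i" if i1: "i \<in> {1..n}" for k i
  proof (cases "n - i \<le> k")
    case True
    define m where "m = k - (n - i)"
    define w where "w = (f ^^ m) (a i)"
    have ai: "a i \<in> ideal_pow I i" using a i1 by blast
    have ige: "i \<ge> 1" using i1 by simp
    have wI: "w \<in> I" unfolding w_def using fiter[OF ige ai, of m] PkI[OF ige] by blast
    have hk: "h k i = y ^ (n - i) * w" unfolding h_def w_def m_def using True by (simp add: mult.commute)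
    have sm: "Suc k - (n - i) = Suc m" using True unfolding m_def by simp
    have hk1: "h (Suc k) i = y ^ (n - i) * f w" unfolding h_def w_def using True sm
      by (simp add: mult.commute)
    have "f (y ^ (n - i) * w) = y ^ (n - i) * f w" using flin wI IJ by blast
    thus ?thesis using hk hk1 by simp
  next
    case False
    hence nik: "n - i - k = Suc (n - i - Suc k)" by simp
    define c where "c = a i * x ^ (n - i - Suc k) * y ^ k"
    have hk: "h k i = c * x" unfolding h_def c_def using False nik
      by (simp only: if_False power_Suc mult_ac)
    have "f (c * x) = c * y" using flin[OF xJ] y_def by simp
    moreover have "h (Suc k) i = c * y"
    proof (cases "n - i \<le> Suc k")
      case True
      hence "n - i - Suc k = 0" "n - i = Suc k" using False by auto
      thus ?thesis unfolding h_def c_def by (simp only: if_True funpow_0 power_0 mult_1_right mult_1_left le_refl power_Suc mult_ac)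
    next
      case False
      thus ?thesis unfolding h_def c_def by (simp only: if_False power_Suc mult_ac)
    qed
    ultimately show ?thesis using hk by simp
  qed
  have Estep: "E (Suc k) = f (E k)" if "k < n" for k
  proof -
    have S: "(\<Sum>i=1..n. h k i) \<in> I" by (rule ideal_sum[OF I]) (use hI in auto)
    have nk: "n - k = Suc (n - Suc k)" using that by simp
    have first: "x ^ (n - k) * y ^ k = (x ^ (n - Suc k) * y ^ k) * x" unfolding nk by (simp add: ac_simps)
    have fJ: "x ^ (n - k) * y ^ k \<in> J" unfolding first by (rule ideal_mult[OF J xJ])
    have "f (E k) = f (x ^ (n - k) * y ^ k) + f (\<Sum>i=1..n. h k i)"
      unfolding E_def using fadd fJ S IJ by blast
    also have "f (x ^ (n - k) * y ^ k) = x ^ (n - Suc k) * y ^ Suc k"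
    proof -
      have "f (x ^ (n - k) * y ^ k) = f ((x ^ (n - Suc k) * y ^ k) * x)" using first by simp
      also have "\<dots> = (x ^ (n - Suc k) * y ^ k) * y" using flin[OF xJ] unfolding y_def by simp
      also have "\<dots> = x ^ (n - Suc k) * y ^ Suc k" by (simp add: ac_simps)
      finally show ?thesis .
    qed
    also have "f (\<Sum>i=1..n. h k i) = (\<Sum>i=1..n. f (h k i))"
      by (rule lin_sum[OF lin[folded J_def] I IJ]) (use hI in auto)
    also have "\<dots> = (\<Sum>i=1..n. h (Suc k) i)" by (rule sum.cong) (auto simp: hstep)
    finally show ?thesis unfolding E_def by simp
  qed
  have E0: "E 0 = 0"
  proof -
    have "(\<Sum>i=1..n. h 0 i) = (\<Sum>i=1..n. a i * x ^ (n - i))"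
      by (rule sum.cong) (auto simp: h_def)
    thus ?thesis unfolding E_def using eq by simp
  qed
  have Ek: "k \<le> n \<Longrightarrow> E k = 0" for k
  proof (induction k)
    case 0 thus ?case using E0 by simp
  next
    case (Suc k) thus ?case using Estep[of k] f0 by simp
  qed
  have "E n = y ^ n + (\<Sum>i=1..n. (f ^^ i) (a i) * y ^ (n - i))"
  proof -
    have "(\<Sum>i=1..n. h n i) = (\<Sum>i=1..n. (f ^^ i) (a i) * y ^ (n - i))"
      by (rule sum.cong) (auto simp: h_def)
    thus ?thesis unfolding E_def by simp
  qed
  hence eqy: "y ^ n + (\<Sum>i=1..n. (f ^^ i) (a i) * y ^ (n - i)) = 0" using Ek[of n] by simp
  have "\<forall>i\<in>{1..n}. (f ^^ i) (a i) \<in> ideal_pow I i" using a fiter by auto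
  thus ?thesis unfolding y_def[symmetric] integral_closure_ideal_def using n eqy
    by (intro CollectI exI[of _ n] conjI exI[of _ "\<lambda>i. (f ^^ i) (a i)"]) auto
qed


theorem theorem6p2:
  fixes m :: "'a::comm_ring_1 set" and I :: "'a set"
  assumes "cohen_macaulay_local m"
    and "krull_dim TYPE('a) = 1"
    and "is_trace_ideal I"
  shows "is_trace_ideal (integral_closure_ideal I)"
proof -
  have J: "is_ideal (icl I)" by (rule icl_ideal)
  have "trace_ideal_of (icl I) = icl I"
  proof
    show "trace_ideal_of (icl I) \<subseteq> icl I" unfolding trace_ideal_of_def
    proof (rule ideal_gen_least[OF J], rule subsetI)
      fix u assume "u \<in> {f x | f x. linear_on (icl I) f \<and> x \<in> icl I}"
      then obtain g z where "u = g z" "linear_on (icl I) g" "z \<in> icl I" by blast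
      thus "u \<in> icl I" using trace_icl[OF assms(3)] by simp
    qed
    show "icl I \<subseteq> trace_ideal_of (icl I)"
    proof
      fix x assume x: "x \<in> icl I"
      have "linear_on (icl I) id" unfolding linear_on_def by simp
      hence "x \<in> {f x | f x. linear_on (icl I) f \<and> x \<in> icl I}" using x
        by (intro CollectI exI[of _ id] exI[of _ x]) simp
      thus "x \<in> trace_ideal_of (icl I)" unfolding trace_ideal_of_def by (rule subsetD[OF ideal_gen_sub])
    qed
  qed
  thus ?thesis unfolding is_trace_ideal_def using J by simp
qed

end
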